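(* (a) Let $x\in P$ and $(y,v')\in\mathcal{P}$ with $x\neq y$ and $v'\in x'^{\perp}$ in $S'$. Then $|\{x,(y,v')\}^{\perp}|\geq 3$ in $\mathbb{S}$. (b) Let $u'\in P'$ and $(y,v')\in\mathcal{P}$ with $u'\neq v'$ and $y\in u^{\perp}$ in $S$. Then $|\{u',(y,v')\}^{\perp}|\geq 3$ in $\mathbb{S}$.
   Context: Let $S=(P,L)$ and $S'=(P',L')$ be generalized quadrangles of order $(2,2)$ (every line has 3 points, every point lies on 3 lines, and for each point $x$ and line $l\not\ni x$ exactly one point of $l$ is collinear with $x$), with an isomorphism $x\mapsto x'$ from $S$ to $S'$ (write $u$ for the preimage of $u'\in P'$). In a point-line geometry, $x^{\perp}$ is $x$ together with all points collinear with $x$, and $A^{\perp}=\bigcap_{a\in A}a^{\perp}$. A triad is a set of three pairwise non-collinear points, complete if $|T^{\perp}|=3$. Let $\mathcal{P}=\{(x,y')\in P\times P':y'\in x'^{\perp}\}$ and $\mathcal{L}$ the set of all $3$-subsets $\{(x,u'),(y,v'),(z,w')\}$ of $\mathcal{P}$ where $T=\{x,y,z\}$ (three distinct points) is a line or complete triad of $S$ and $\{u',v',w'\}=T'^{\perp}$ in $S'$ with $u',v',w'$ distinct. The geometry $\mathbb{S}=(\mathbb{P},\mathbb{L})$ has point set $\mathbb{P}=\mathcal{P}\cup P\cup P'$ (disjoint union) and line set $\mathcal{L}\cup\{\{x,(x,u'),u'\}:(x,u')\in\mathcal{P}\}$. *)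

theory Defs
  imports Main
begin

definition collinear :: "'p set \<Rightarrow> 'p set set \<Rightarrow> 'p \<Rightarrow> 'p \<Rightarrow> bool" where
  "collinear Pts Lns x y \<longleftrightarrow> (\<exists>l\<in>Lns. x \<in> l \<and> y \<in> l)"

definition perp :: "'p set \<Rightarrow> 'p set set \<Rightarrow> 'p \<Rightarrow> 'p set" where
  "perp Pts Lns x = {y \<in> Pts. y = x \<or> collinear Pts Lns x y}"

definition perpset :: "'p set \<Rightarrow> 'p set set \<Rightarrow> 'p set \<Rightarrow> 'p set" where
  "perpset Pts Lns A = {y \<in> Pts. \<forall>a\<in>A. y \<in> perp Pts Lns a}"

definition GQ22 :: "'p set \<Rightarrow> 'p set set \<Rightarrow> bool" where
  "GQ22 Pts Lns \<longleftrightarrow>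
     (\<forall>l\<in>Lns. l \<subseteq> Pts \<and> card l = 3) \<and>
     (\<forall>x\<in>Pts. card {l\<in>Lns. x \<in> l} = 3) \<and>
     (\<forall>x\<in>Pts. \<forall>l\<in>Lns. x \<notin> l \<longrightarrow> (\<exists>!y. y \<in> l \<and> collinear Pts Lns x y))"

definition geom_iso :: "('p \<Rightarrow> 'q) \<Rightarrow> 'p set \<Rightarrow> 'p set set \<Rightarrow> 'q set \<Rightarrow> 'q set set \<Rightarrow> bool" where
  "geom_iso f P L P' L' \<longleftrightarrow> bij_betw f P P' \<and> (\<lambda>l. f ` l) ` L = L'"

definition triad :: "'p set \<Rightarrow> 'p set set \<Rightarrow> 'p set \<Rightarrow> bool" where
  "triad Pts Lns T \<longleftrightarrow> T \<subseteq> Pts \<and> card T = 3 \<and>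
     (\<forall>x\<in>T. \<forall>y\<in>T. x \<noteq> y \<longrightarrow> \<not> collinear Pts Lns x y)"

definition complete_triad :: "'p set \<Rightarrow> 'p set set \<Rightarrow> 'p set \<Rightarrow> bool" where
  "complete_triad Pts Lns T \<longleftrightarrow> triad Pts Lns T \<and> card (perpset Pts Lns T) = 3"

definition calP :: "'a set \<Rightarrow> 'b set \<Rightarrow> 'b set set \<Rightarrow> ('a \<Rightarrow> 'b) \<Rightarrow> ('a \<times> 'b) set" where
  "calP P P' L' f = {(x, y). x \<in> P \<and> y \<in> perp P' L' (f x)}"

definition calL :: "'a set \<Rightarrow> 'a set set \<Rightarrow> 'b set \<Rightarrow> 'b set set \<Rightarrow> ('a \<Rightarrow> 'b) \<Rightarrow> ('a \<times> 'b) set set" where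
  "calL P L P' L' f = {B. B \<subseteq> calP P P' L' f \<and> card B = 3 \<and> card (fst ` B) = 3 \<and>
      card (snd ` B) = 3 \<and>
      (fst ` B \<in> L \<or> complete_triad P L (fst ` B)) \<and>
      snd ` B = perpset P' L' (f ` fst ` B)}"

datatype ('a, 'b) bpt = BP 'a | BM 'a 'b | BQ 'b

definition bigP :: "'a set \<Rightarrow> 'a set set \<Rightarrow> 'b set \<Rightarrow> 'b set set \<Rightarrow> ('a \<Rightarrow> 'b) \<Rightarrow> ('a, 'b) bpt set" where
  "bigP P L P' L' f = (\<lambda>(x, y). BM x y) ` calP P P' L' f \<union> BP ` P \<union> BQ ` P'"

definition bigL :: "'a set \<Rightarrow> 'a set set \<Rightarrow> 'b set \<Rightarrow> 'b set set \<Rightarrow> ('a \<Rightarrow> 'b) \<Rightarrow> ('a, 'b) bpt set set" where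
  "bigL P L P' L' f = (\<lambda>B. (\<lambda>(x, y). BM x y) ` B) ` calL P L P' L' f \<union>
     {{BP x, BM x u, BQ u} | x u. (x, u) \<in> calP P P' L' f}"

end

theory Submission
  imports Defs
begin

lemma card3_one:
  assumes "card S = 3" "a \<in> S"
  obtains b c where "S = {a,b,c}" "a \<noteq> b" "a \<noteq> c" "b \<noteq> c"
  using assms unfolding card_3_iff by auto

lemma card3_two:
  assumes "card S = 3" "a \<in> S" "b \<in> S" "a \<noteq> b"
  obtains c where "S = {a,b,c}" "c \<noteq> a" "c \<noteq> b"
  using assms unfolding card_3_iff by auto

locale gq =
  fixes Pt :: "'p set" and Ln :: "'p set set"
  assumes gq: "GQ22 Pt Ln"
begin

abbreviation col where "col \<equiv> collinear Pt Ln"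

lemma line_sub: "l \<in> Ln \<Longrightarrow> l \<subseteq> Pt" using gq unfolding GQ22_def by auto
lemma line_card: "l \<in> Ln \<Longrightarrow> card l = 3" using gq unfolding GQ22_def by auto
lemma line_fin: "l \<in> Ln \<Longrightarrow> finite l" using line_card by (metis card_ge_0_finite zero_less_numeral)
lemma pt_lines: "x \<in> Pt \<Longrightarrow> card {l\<in>Ln. x\<in>l} = 3" using gq unfolding GQ22_def by auto
lemma pt_lines_fin: "x \<in> Pt \<Longrightarrow> finite {l\<in>Ln. x\<in>l}" using pt_lines by (metis card_ge_0_finite zero_less_numeral)
lemma ax: "x \<in> Pt \<Longrightarrow> l \<in> Ln \<Longrightarrow> x \<notin> l \<Longrightarrow> y \<in> l \<Longrightarrow> z \<in> l \<Longrightarrow> col x y \<Longrightarrow> col x z \<Longrightarrow> y = z"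
  using gq unfolding GQ22_def by metis
lemma ax_ex: "x \<in> Pt \<Longrightarrow> l \<in> Ln \<Longrightarrow> x \<notin> l \<Longrightarrow> \<exists>y\<in>l. col x y"
  using gq unfolding GQ22_def by metis
lemma col_sym: "col x y \<Longrightarrow> col y x" unfolding collinear_def by auto
lemma col_commute: "col x y \<longleftrightarrow> col y x" unfolding collinear_def by auto
lemma col_P: "col x y \<Longrightarrow> x \<in> Pt \<and> y \<in> Pt" unfolding collinear_def using line_sub by blast
lemma colI: "l \<in> Ln \<Longrightarrow> x \<in> l \<Longrightarrow> y \<in> l \<Longrightarrow> col x y" unfolding collinear_def by auto
lemma colE: "col x y \<Longrightarrow> (\<And>l. l \<in> Ln \<Longrightarrow> x \<in> l \<Longrightarrow> y \<in> l \<Longrightarrow> thesis) \<Longrightarrow> thesis"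
  unfolding collinear_def by auto

lemma line_inter:
  assumes "l \<in> Ln" "m \<in> Ln" "a \<in> l" "a \<in> m" "b \<in> l" "b \<in> m" "a \<noteq> b"
  shows "l = m"
proof (rule ccontr)
  assume ne: "l \<noteq> m"
  have "\<not> m \<subseteq> l"
    using card_subset_eq[of l m] line_fin line_card assms ne by metis
  then obtain c where c: "c \<in> m" "c \<notin> l" by auto
  have "c \<in> Pt" using c assms line_sub by auto
  moreover have "col c a" "col c b" using colI assms c by auto
  ultimately show False using ax[of c l a b] assms c by auto
qed

lemma tri:
  assumes "col a b" "col b c" "col a c" "a \<noteq> b" "b \<noteq> c" "a \<noteq> c"
  shows "\<exists>l\<in>Ln. a \<in> l \<and> b \<in> l \<and> c \<in> l"
proof -
  obtain l where l: "l \<in> Ln" "a \<in> l" "b \<in> l" using assms(1) colE by metis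
  have "c \<in> l"
  proof (rule ccontr)
    assume "c \<notin> l"
    moreover have "c \<in> Pt" using col_P assms by blast
    ultimately show False using ax[of c l a b] l assms col_sym by blast
  qed
  then show ?thesis using l by blast
qed

lemma perp_iff: "y \<in> perp Pt Ln x \<longleftrightarrow> y \<in> Pt \<and> (y = x \<or> col x y)"
  unfolding perp_def by auto

lemma perpset_iff: "y \<in> perpset Pt Ln A \<longleftrightarrow> y \<in> Pt \<and> (\<forall>a\<in>A. y = a \<or> col a y)"
  unfolding perpset_def perp_def by auto

lemma perp_fin: "x \<in> Pt \<Longrightarrow> finite (perp Pt Ln x)"
proof -
  assume x: "x \<in> Pt"
  have "perp Pt Ln x \<subseteq> insert x (\<Union>{l\<in>Ln. x\<in>l})"
    by (auto simp: perp_iff collinear_def)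
  moreover have "finite (insert x (\<Union>{l\<in>Ln. x\<in>l}))"
    using pt_lines_fin[OF x] line_fin by auto
  ultimately show ?thesis by (rule finite_subset)
qed

lemma P_fin: "finite Pt"
proof (cases "Pt = {}")
  case False
  then obtain p where p: "p \<in> Pt" by auto
  have "Pt \<subseteq> (\<Union>r\<in>perp Pt Ln p. perp Pt Ln r)"
  proof
    fix q assume q: "q \<in> Pt"
    have "{l\<in>Ln. q\<in>l} \<noteq> {}" using pt_lines[OF q] by (metis card.empty zero_neq_numeral)
    then obtain l where l: "l \<in> Ln" "q \<in> l" by auto
    show "q \<in> (\<Union>r\<in>perp Pt Ln p. perp Pt Ln r)"
    proof (cases "p \<in> l")
      case True
      then have "q \<in> perp Pt Ln p" using colI l q perp_iff by blast
      moreover have "q \<in> perp Pt Ln q" using q perp_iff by auto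
      ultimately show ?thesis by blast
    next
      case False
      then obtain r where r: "r \<in> l" "col p r" using ax_ex p l by blast
      have "r \<in> perp Pt Ln p" using r col_P perp_iff by blast
      moreover have "q \<in> perp Pt Ln r" using colI l r q perp_iff by blast
      ultimately show ?thesis by blast
    qed
  qed
  moreover have "finite (\<Union>r\<in>perp Pt Ln p. perp Pt Ln r)"
    using perp_fin p perp_iff by auto
  ultimately show ?thesis by (rule finite_subset)
qed simp

lemma perpset_noncol:
  assumes "a \<in> Pt" "b \<in> Pt" "a \<noteq> b" "\<not> col a b"
    and "p \<in> perpset Pt Ln {a,b}" "q \<in> perpset Pt Ln {a,b}" "p \<noteq> q"
  shows "\<not> col p q"
proof
  assume pq: "col p q"
  have pa: "p \<noteq> a" "q \<noteq> a" "p \<noteq> b" "q \<noteq> b" "col a p" "col a q" "col b p" "col b q"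
    using assms unfolding perpset_iff by (auto simp: col_commute)
  obtain m where m: "m \<in> Ln" "a \<in> m" "p \<in> m" "q \<in> m"
    using tri[of a p q] pa pq assms by (metis col_sym)
  obtain m' where m': "m' \<in> Ln" "b \<in> m'" "p \<in> m'" "q \<in> m'"
    using tri[of b p q] pa pq assms by (metis col_sym)
  have "m = m'" using line_inter m m' assms by metis
  then show False using m m' assms colI by metis
qed

lemma nc_perp_card:
  assumes a: "a \<in> Pt" and b: "b \<in> Pt" and ab: "a \<noteq> b" "\<not> col a b"
  shows "card (perpset Pt Ln {a,b}) = 3"
proof -
  obtain l1 l2 l3 where ls: "{l\<in>Ln. a\<in>l} = {l1,l2,l3}" "l1 \<noteq> l2" "l2 \<noteq> l3" "l1 \<noteq> l3"
    using pt_lines[OF a] unfolding card_3_iff by blast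
  have li: "l \<in> Ln" "a \<in> l" "b \<notin> l" if "l \<in> {l1,l2,l3}" for l
  proof -
    have "l \<in> {l\<in>Ln. a\<in>l}" using that ls(1) by simp
    then show "l \<in> Ln" "a \<in> l" by simp_all
    then show "b \<notin> l" using colI[of l a b] ab(2) by blast
  qed
  have ex: "\<exists>c\<in>l. col b c" if "l \<in> {l1,l2,l3}" for l using ax_ex[OF b] li[OF that] by blast
  obtain a1 where a1: "a1 \<in> l1" "col b a1" using ex by blast
  obtain a2 where a2: "a2 \<in> l2" "col b a2" using ex by blast
  obtain a3 where a3: "a3 \<in> l3" "col b a3" using ex by blast
  have ane: "a1 \<noteq> a" "a2 \<noteq> a" "a3 \<noteq> a" using a1 a2 a3 ab by (auto simp: col_commute)
  have d12: "a1 \<noteq> a2" using line_inter[of l1 l2 a a1] li a1 a2 ane ls by auto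
  have d13: "a1 \<noteq> a3" using line_inter[of l1 l3 a a1] li a1 a3 ane ls by auto
  have d23: "a2 \<noteq> a3" using line_inter[of l2 l3 a a2] li a2 a3 ane ls by auto
  have "perpset Pt Ln {a,b} = {a1,a2,a3}"
  proof
    have mem: "s \<in> perpset Pt Ln {a,b}" if "l \<in> {l1,l2,l3}" "s \<in> l" "col b s" for s l
    proof -
      have "s \<in> Pt" using col_P that(3) by blast
      moreover have "col a s" using colI[OF li(1)[OF that(1)] li(2)[OF that(1)] that(2)] .
      ultimately show ?thesis using that(3) unfolding perpset_iff by auto
    qed
    show "{a1,a2,a3} \<subseteq> perpset Pt Ln {a,b}"
      using mem[of l1 a1] mem[of l2 a2] mem[of l3 a3] a1 a2 a3 by auto
  next
    show "perpset Pt Ln {a,b} \<subseteq> {a1,a2,a3}"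
    proof
      fix p assume p: "p \<in> perpset Pt Ln {a,b}"
      then have pP: "p \<in> Pt" and pa: "p = a \<or> col a p" and pb: "p = b \<or> col b p"
        unfolding perpset_iff by auto
      have "p \<noteq> a" using pb ab by (auto simp: col_commute)
      moreover have "p \<noteq> b" using pa ab by auto
      ultimately have "col a p" "col b p" using pa pb by auto
      then obtain l where l: "l \<in> Ln" "a \<in> l" "p \<in> l" using colE by metis
      then have "l = l1 \<or> l = l2 \<or> l = l3" using ls(1) by blast
      moreover have "p = a1" if "l = l1"
        using ax[OF b l(1) li(3) l(3), of a1] that \<open>col b p\<close> a1 by blast
      moreover have "p = a2" if "l = l2"
        using ax[OF b l(1) li(3) l(3), of a2] that \<open>col b p\<close> a2 by blast
      moreover have "p = a3" if "l = l3"
        using ax[OF b l(1) li(3) l(3), of a3] that \<open>col b p\<close> a3 by blast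
      ultimately show "p \<in> {a1,a2,a3}" by blast
    qed
  qed
  then show ?thesis using d12 d13 d23 by simp
qed

lemma perp_sym: "x \<in> perp Pt Ln y \<Longrightarrow> y \<in> Pt \<Longrightarrow> y \<in> perp Pt Ln x"
  unfolding perp_iff by (auto simp: col_commute)

lemma line_perp2:
  assumes l: "l \<in> Ln" and ab: "a \<in> l" "b \<in> l" "a \<noteq> b"
  shows "perpset Pt Ln {a,b} = l"
proof
  show "l \<subseteq> perpset Pt Ln {a,b}"
  proof
    fix x assume x: "x \<in> l"
    have "x \<in> Pt" using line_sub[OF l] x by blast
    moreover have "col a x" "col b x" using colI[OF l ab(1) x] colI[OF l ab(2) x] .
    ultimately show "x \<in> perpset Pt Ln {a,b}" by (simp add: perpset_iff)
  qed
next
  show "perpset Pt Ln {a,b} \<subseteq> l"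
  proof
    fix p assume p: "p \<in> perpset Pt Ln {a,b}"
    show "p \<in> l"
    proof (rule ccontr)
      assume pl: "p \<notin> l"
      then have "p \<noteq> a" "p \<noteq> b" using ab by auto
      then have "col a p" "col b p" "p \<in> Pt" using p by (simp_all add: perpset_iff)
      then have "col p a" "col p b" by (simp_all add: col_commute)
      then show False using ax[OF \<open>p \<in> Pt\<close> l pl ab(1) ab(2)] ab(3) by blast
    qed
  qed
qed

lemma line_perp:
  assumes "l \<in> Ln" shows "perpset Pt Ln l = l"
proof
  show "l \<subseteq> perpset Pt Ln l" using assms colI line_sub[OF assms] by (auto simp: perpset_iff)
next
  obtain a b c where "l = {a,b,c}" "a \<noteq> b" using line_card[OF assms] unfolding card_3_iff by blast
  then have "perpset Pt Ln l \<subseteq> perpset Pt Ln {a,b}" by (auto simp: perpset_iff)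
  then show "perpset Pt Ln l \<subseteq> l" using line_perp2 assms \<open>l = {a,b,c}\<close> \<open>a \<noteq> b\<close> by auto
qed

lemma ct_intro:
  assumes "a \<in> Pt" "b \<in> Pt" "c \<in> Pt" "a \<noteq> b" "a \<noteq> c" "b \<noteq> c"
    "\<not> col a b" "\<not> col a c" "\<not> col b c" "card (perpset Pt Ln {a,b,c}) = 3"
  shows "complete_triad Pt Ln {a,b,c}"
  using assms unfolding complete_triad_def triad_def by (auto simp: col_commute)

lemma perpset_anti: "A \<subseteq> B \<Longrightarrow> perpset Pt Ln B \<subseteq> perpset Pt Ln A"
  unfolding perpset_def by blast

lemma perpset3I: "y \<in> Pt \<Longrightarrow> y = a \<or> col a y \<Longrightarrow> y = b \<or> col b y \<Longrightarrow> y = c \<or> col c y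
   \<Longrightarrow> y \<in> perpset Pt Ln {a,b,c}"
  by (simp add: perpset_iff)

lemma regular:
  assumes a: "a \<in> Pt" and b: "b \<in> Pt" and ab: "a \<noteq> b" "\<not> col a b"
    and ps: "perpset Pt Ln {a,b} = {a1,a2,a3}" and d: "a1 \<noteq> a2" "a1 \<noteq> a3" "a2 \<noteq> a3"
  obtains c where "c \<in> Pt" "c \<noteq> a" "c \<noteq> b" "\<not> col a c" "\<not> col b c"
           "perpset Pt Ln {a1,a2,a3} = {a,b,c}" "perpset Pt Ln {a,b,c} = {a1,a2,a3}"
proof -
  have ain: "a1 \<in> perpset Pt Ln {a,b}" "a2 \<in> perpset Pt Ln {a,b}" "a3 \<in> perpset Pt Ln {a,b}"
    using ps by simp_all
  have nc12: "\<not> col a1 a2" by (rule perpset_noncol[OF a b ab ain(1) ain(2) d(1)])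
  have nc13: "\<not> col a1 a3" by (rule perpset_noncol[OF a b ab ain(1) ain(3) d(2)])
  have nc23: "\<not> col a2 a3" by (rule perpset_noncol[OF a b ab ain(2) ain(3) d(3)])
  have nc: "\<not> col a1 a2" "\<not> col a1 a3" "\<not> col a2 a3" "\<not> col a2 a1" "\<not> col a3 a1" "\<not> col a3 a2"
    using nc12 nc13 nc23 by (simp_all add: col_commute)
  have aP: "a1 \<in> Pt" "a2 \<in> Pt" "a3 \<in> Pt" using ain by (simp_all add: perpset_iff)
  have ane: "a1 \<noteq> a" "a2 \<noteq> a" "a3 \<noteq> a" "a1 \<noteq> b" "a2 \<noteq> b" "a3 \<noteq> b"
    using ain ab by (auto simp: perpset_iff col_commute)
  have acol: "col a a1" "col a a2" "col a a3" "col b a1" "col b a2" "col b a3"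
    using ain ane by (simp_all add: perpset_iff)
  have c3: "card (perpset Pt Ln {a1,a2}) = 3" using nc_perp_card[OF aP(1,2) d(1) nc(1)] .
  have abin: "a \<in> perpset Pt Ln {a1,a2}" "b \<in> perpset Pt Ln {a1,a2}"
    using acol a b by (simp_all add: perpset_iff col_commute)
  obtain c where c: "perpset Pt Ln {a1,a2} = {a,b,c}" "c \<noteq> a" "c \<noteq> b"
    by (rule card3_two[OF c3 abin ab(1)])
  have cin: "c \<in> perpset Pt Ln {a1,a2}" using c(1) by simp
  have cP: "c \<in> Pt" using cin by (simp add: perpset_iff)
  have nca: "\<not> col a c" "\<not> col b c"
    using perpset_noncol[OF aP(1,2) d(1) nc(1) abin(1) cin] perpset_noncol[OF aP(1,2) d(1) nc(1) abin(2) cin] c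
    by auto
  have "a1 \<notin> perpset Pt Ln {a1,a2}" using nc(4) d(1) by (simp add: perpset_iff)
  moreover have "a2 \<notin> perpset Pt Ln {a1,a2}" using nc(1) d(1) by (simp add: perpset_iff)
  ultimately have cne: "c \<noteq> a1" "c \<noteq> a2" using cin by auto
  have ccol: "col a1 c" "col a2 c" using cin cne by (simp_all add: perpset_iff)
  have key: "col a3 c"
  proof (rule ccontr)
    assume nc3: "\<not> col a3 c"
    obtain L1 where L1: "L1 \<in> Ln" "a1 \<in> L1" "c \<in> L1" using colE[OF ccol(1)] by blast
    obtain L2 where L2: "L2 \<in> Ln" "a2 \<in> L2" "c \<in> L2" using colE[OF ccol(2)] by blast
    have a3L1: "a3 \<notin> L1" using colI[OF L1(1) L1(2), of a3] nc(2) by blast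
    have a3L2: "a3 \<notin> L2" using colI[OF L2(1) L2(2), of a3] nc(3) by blast
    obtain p where p: "p \<in> L1" "col a3 p" using ax_ex[OF aP(3) L1(1) a3L1] by blast
    obtain q where q: "q \<in> L2" "col a3 q" using ax_ex[OF aP(3) L2(1) a3L2] by blast
    have pne: "p \<noteq> a1" "p \<noteq> c" using p nc nc3 by auto
    have qne: "q \<noteq> a2" "q \<noteq> c" using q nc nc3 by auto
    have L12: "L1 \<noteq> L2" using colI[OF L1(1) L1(2), of a2] L2(2) nc(1) by blast
    have pq: "p \<noteq> q"
    proof
      assume "p = q"
      then have "L1 = L2" using line_inter[OF L1(1) L2(1) L1(3) L2(3) p(1) _ pne(2)[symmetric]] q(1) by blast
      then show False using L12 by blast
    qed
    have H: "\<not> col e s" if hyp: "e \<in> {a,b}" "ai \<in> {a1,a2}" "Li \<in> Ln" "ai \<in> Li" "c \<in> Li" "s \<in> Li" "s \<noteq> ai" "s \<noteq> c"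
      for e s ai Li
    proof
      assume es: "col e s"
      have "\<not> col e c" using hyp(1) nca by blast
      then have eLi: "e \<notin> Li" using colI[OF hyp(3) _ hyp(5), of e] by blast
      have "e \<noteq> s" using eLi hyp(6) by blast
      moreover have "col e ai" "e \<noteq> ai" using acol ane hyp(1,2) by auto
      moreover have "col ai s" using colI[OF hyp(3) hyp(4) hyp(6)] .
      ultimately obtain m where m: "m \<in> Ln" "e \<in> m" "ai \<in> m" "s \<in> m"
        using tri[of e ai s] es hyp(7) by blast
      have "m = Li" using line_inter[OF m(1) hyp(3) m(3) hyp(4) m(4) hyp(6) hyp(7)[symmetric]] .
      then show False using eLi m(2) by blast
    qed
    have npa: "\<not> col a p" "\<not> col b p" using H[of a a1 L1 p] H[of b a1 L1 p] L1 p pne by auto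
    have nqa: "\<not> col a q" "\<not> col b q" using H[of a a2 L2 q] H[of b a2 L2 q] L2 q qne by auto
    obtain La where La: "La \<in> Ln" "a3 \<in> La" "a \<in> La" using colE[OF acol(3)] by blast
    obtain Lb where Lb: "Lb \<in> Ln" "a3 \<in> Lb" "b \<in> Lb" using colE[OF acol(6)] by blast
    obtain M1 where M1: "M1 \<in> Ln" "a3 \<in> M1" "p \<in> M1" using colE[OF p(2)] by blast
    obtain M2 where M2: "M2 \<in> Ln" "a3 \<in> M2" "q \<in> M2" using colE[OF q(2)] by blast
    have dd1: "La \<noteq> Lb" using colI[OF La(1) La(3), of b] Lb(3) ab(2) by blast
    have dd2: "La \<noteq> M1" using colI[OF La(1) La(3), of p] M1(3) npa(1) by blast
    have dd3: "La \<noteq> M2" using colI[OF La(1) La(3), of q] M2(3) nqa(1) by blast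
    have dd4: "Lb \<noteq> M1" using colI[OF Lb(1) Lb(3), of p] M1(3) npa(2) by blast
    have dd5: "Lb \<noteq> M2" using colI[OF Lb(1) Lb(3), of q] M2(3) nqa(2) by blast
    have "M1 = M2"
    proof (rule ccontr)
      assume "M1 \<noteq> M2"
      then have "card {La,Lb,M1,M2} = 4" using dd1 dd2 dd3 dd4 dd5 by simp
      moreover have sb: "{La,Lb,M1,M2} \<subseteq> {l\<in>Ln. a3\<in>l}" using La Lb M1 M2 by simp
      ultimately have "4 \<le> card {l\<in>Ln. a3\<in>l}" using card_mono[OF pt_lines_fin[OF aP(3)] sb] by simp
      then show False using pt_lines[OF aP(3)] by simp
    qed
    then have "col p q" using colI[OF M1(1) M1(3)] M2(3) by blast
    moreover have "col p c" "col q c" using colI[OF L1(1) p(1) L1(3)] colI[OF L2(1) q(1) L2(3)] .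
    ultimately obtain m where m: "m \<in> Ln" "p \<in> m" "q \<in> m" "c \<in> m"
      using tri[of p q c] pq pne(2) qne(2) by blast
    have "m = L1" using line_inter[OF m(1) L1(1) m(2) p(1) m(4) L1(3) pne(2)] .
    moreover have "m = L2" using line_inter[OF m(1) L2(1) m(3) q(1) m(4) L2(3) qne(2)] .
    ultimately show False using L12 by simp
  qed
  have sub1: "perpset Pt Ln {a,b,c} \<subseteq> perpset Pt Ln {a,b}" by (rule perpset_anti) blast
  have sub2: "perpset Pt Ln {a1,a2,a3} \<subseteq> perpset Pt Ln {a1,a2}" by (rule perpset_anti) blast
  have ks: "col c a1" "col c a2" "col c a3" using ccol key by (simp_all add: col_commute)
  have e1: "perpset Pt Ln {a,b,c} = {a1,a2,a3}"
  proof
    show "perpset Pt Ln {a,b,c} \<subseteq> {a1,a2,a3}" using sub1 ps by simp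
    have "a1 \<in> perpset Pt Ln {a,b,c}" by (rule perpset3I) (use aP acol ks in auto)
    moreover have "a2 \<in> perpset Pt Ln {a,b,c}" by (rule perpset3I) (use aP acol ks in auto)
    moreover have "a3 \<in> perpset Pt Ln {a,b,c}" by (rule perpset3I) (use aP acol ks in auto)
    ultimately show "{a1,a2,a3} \<subseteq> perpset Pt Ln {a,b,c}" by simp
  qed
  have ac: "col a1 a" "col a2 a" "col a3 a" "col a1 b" "col a2 b" "col a3 b"
    using acol by (simp_all add: col_commute)
  have e2: "perpset Pt Ln {a1,a2,a3} = {a,b,c}"
  proof
    show "perpset Pt Ln {a1,a2,a3} \<subseteq> {a,b,c}" using sub2 c(1) by simp
    have "a \<in> perpset Pt Ln {a1,a2,a3}" by (rule perpset3I) (use a ac in auto)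
    moreover have "b \<in> perpset Pt Ln {a1,a2,a3}" by (rule perpset3I) (use b ac in auto)
    moreover have "c \<in> perpset Pt Ln {a1,a2,a3}" by (rule perpset3I) (use cP ccol key in auto)
    ultimately show "{a,b,c} \<subseteq> perpset Pt Ln {a1,a2,a3}" by simp
  qed
  show ?thesis by (rule that[OF cP c(2) c(3) nca(1) nca(2) e2 e1])
qed
end

section \<open>Transfer along the isomorphism\<close>

lemma col_tr:
  assumes iso: "geom_iso f P L P' L'" and sub: "\<And>l. l \<in> L \<Longrightarrow> l \<subseteq> P"
    and a: "a \<in> P" and b: "b \<in> P"
  shows "collinear P' L' (f a) (f b) \<longleftrightarrow> collinear P L a b"
proof
  assume "collinear P L a b"
  then obtain l where "l \<in> L" "a \<in> l" "b \<in> l" unfolding collinear_def by auto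
  moreover have "f ` l \<in> L'" using iso \<open>l \<in> L\<close> unfolding geom_iso_def by auto
  ultimately show "collinear P' L' (f a) (f b)" unfolding collinear_def by auto
next
  assume "collinear P' L' (f a) (f b)"
  then obtain l' where l': "l' \<in> L'" "f a \<in> l'" "f b \<in> l'" unfolding collinear_def by auto
  then obtain l where l: "l \<in> L" "l' = f ` l" using iso unfolding geom_iso_def by auto
  have inj: "inj_on f P" using iso unfolding geom_iso_def bij_betw_def by auto
  have "a \<in> l" using l l' sub[OF l(1)] inj a by (auto dest: inj_onD)
  moreover have "b \<in> l" using l l' sub[OF l(1)] inj b by (auto dest: inj_onD)
  ultimately show "collinear P L a b" using l unfolding collinear_def by auto
qed

lemma perp_tr:
  assumes iso: "geom_iso f P L P' L'" and sub: "\<And>l. l \<in> L \<Longrightarrow> l \<subseteq> P"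
    and a: "a \<in> P" and b: "b \<in> P"
  shows "f b \<in> perp P' L' (f a) \<longleftrightarrow> b \<in> perp P L a"
proof -
  have inj: "inj_on f P" and im: "f ` P = P'" using iso unfolding geom_iso_def bij_betw_def by auto
  show ?thesis unfolding perp_def using col_tr[OF iso sub a b] a b inj im
    by (auto dest: inj_onD)
qed

lemma perpset_tr:
  assumes iso: "geom_iso f P L P' L'" and sub: "\<And>l. l \<in> L \<Longrightarrow> l \<subseteq> P"
    and A: "A \<subseteq> P"
  shows "perpset P' L' (f ` A) = f ` perpset P L A"
proof -
  have inj: "inj_on f P" and im: "f ` P = P'" using iso unfolding geom_iso_def bij_betw_def by auto
  show ?thesis
  proof
    show "perpset P' L' (f ` A) \<subseteq> f ` perpset P L A"
    proof
      fix y' assume y': "y' \<in> perpset P' L' (f ` A)"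
      then have "y' \<in> P'" unfolding perpset_def by auto
      then obtain y where y: "y \<in> P" "y' = f y" using im by auto
      have "\<forall>a\<in>A. y \<in> perp P L a" using y' y perp_tr[OF iso sub] A unfolding perpset_def by auto
      then show "y' \<in> f ` perpset P L A" using y unfolding perpset_def by auto
    qed
  next
    show "f ` perpset P L A \<subseteq> perpset P' L' (f ` A)"
    proof
      fix y' assume "y' \<in> f ` perpset P L A"
      then obtain y where y: "y \<in> perpset P L A" "y' = f y" by auto
      then have yP: "y \<in> P" unfolding perpset_def by auto
      have "\<forall>a\<in>A. f y \<in> perp P' L' (f a)" using y yP perp_tr[OF iso sub] A unfolding perpset_def by auto
      then show "y' \<in> perpset P' L' (f ` A)" using y yP im unfolding perpset_def by auto
    qed
  qed
qed

lemma ct_tr: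
  assumes iso: "geom_iso f P L P' L'" and sub: "\<And>l. l \<in> L \<Longrightarrow> l \<subseteq> P"
    and T: "T \<subseteq> P" and ct: "complete_triad P' L' (f ` T)"
  shows "complete_triad P L T"
proof -
  have inj: "inj_on f P" using iso unfolding geom_iso_def bij_betw_def by auto
  have injT: "inj_on f T" using inj T inj_on_subset by blast
  have c1: "card T = 3" using ct card_image[OF injT] unfolding complete_triad_def triad_def by auto
  have c2: "\<forall>x\<in>T. \<forall>y\<in>T. x \<noteq> y \<longrightarrow> \<not> collinear P L x y"
  proof (intro ballI impI)
    fix x y assume xy: "x \<in> T" "y \<in> T" "x \<noteq> y"
    then have "f x \<noteq> f y" using injT by (auto dest: inj_onD)
    then have "\<not> collinear P' L' (f x) (f y)" using ct xy unfolding complete_triad_def triad_def by auto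
    then show "\<not> collinear P L x y" using col_tr[OF iso sub] xy T by auto
  qed
  have "card (perpset P L T) = 3"
  proof -
    have "perpset P L T \<subseteq> P" unfolding perpset_def by auto
    then have "card (f ` perpset P L T) = card (perpset P L T)"
      using card_image inj inj_on_subset by blast
    then show ?thesis using ct perpset_tr[OF iso sub T] unfolding complete_triad_def by auto
  qed
  then show ?thesis using c1 c2 T unfolding complete_triad_def triad_def by auto
qed

lemma mk_line:
  assumes "a \<in> P" "b \<in> P" "c \<in> P" "a \<noteq> b" "a \<noteq> c" "b \<noteq> c"
    and "{a,b,c} \<in> L \<or> complete_triad P L {a,b,c}"
    and ps: "perpset P' L' (f ` {a,b,c}) = {p,q,r}" and "p \<noteq> q" "p \<noteq> r" "q \<noteq> r"
  shows "{BM a p, BM b q, BM c r} \<in> bigL P L P' L' f \<and> (a,p) \<in> calP P P' L' f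
     \<and> (b,q) \<in> calP P P' L' f \<and> (c,r) \<in> calP P P' L' f"
proof -
  have pin: "p \<in> perp P' L' (f a)" "q \<in> perp P' L' (f b)" "r \<in> perp P' L' (f c)"
    using ps unfolding perpset_def by blast+
  then have cp: "(a,p) \<in> calP P P' L' f" "(b,q) \<in> calP P P' L' f" "(c,r) \<in> calP P P' L' f"
    using assms unfolding calP_def by auto
  define B where "B = {(a,p),(b,q),(c,r)}"
  have fB: "fst ` B = {a,b,c}" "snd ` B = {p,q,r}" unfolding B_def by auto
  have "B \<in> calL P L P' L' f"
    unfolding calL_def using fB cp assms unfolding B_def by auto
  moreover have "(\<lambda>(x, y). BM x y) ` B = {BM a p, BM b q, BM c r}" unfolding B_def by auto
  ultimately have "{BM a p, BM b q, BM c r} \<in> bigL P L P' L' f" unfolding bigL_def by blast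
  then show ?thesis using cp by auto
qed

lemma short_line:
  assumes "(x,u) \<in> calP P P' L' f"
  shows "{BP x, BM x u, BQ u} \<in> bigL P L P' L' f"
  using assms unfolding bigL_def by blast

lemma in_bigP:
  assumes "(x,u) \<in> calP P P' L' f"
  shows "BP x \<in> bigP P L P' L' f" "BM x u \<in> bigP P L P' L' f" "BQ u \<in> bigP P L P' L' f"
  using assms unfolding bigP_def calP_def perp_def by force+

lemma in_perpset2:
  assumes "Z \<in> Pts" "collinear Pts Lns X1 Z" "collinear Pts Lns X2 Z"
  shows "Z \<in> perpset Pts Lns {X1, X2}"
  using assms unfolding perpset_def perp_def by (auto simp: collinear_def)

lemma colS: "l \<in> Lns \<Longrightarrow> X \<in> l \<Longrightarrow> Y \<in> l \<Longrightarrow> collinear Pts Lns X Y"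
  unfolding collinear_def by auto

lemma card_ge3:
  assumes "finite A" "Z1 \<in> A" "Z2 \<in> A" "Z3 \<in> A" "Z1 \<noteq> Z2" "Z1 \<noteq> Z3" "Z2 \<noteq> Z3"
  shows "card A \<ge> 3"
proof -
  have "card {Z1,Z2,Z3} = 3" using assms by auto
  moreover have "card {Z1,Z2,Z3} \<le> card A" using assms by (intro card_mono) auto
  ultimately show ?thesis by simp
qed


theorem lemma4p3:
  fixes P :: "'a set" and L :: "'a set set" and P' :: "'b set" and L' :: "'b set set"
    and f :: "'a \<Rightarrow> 'b"
  assumes "GQ22 P L" and "GQ22 P' L'" and "geom_iso f P L P' L'"
  shows "(\<forall>x y v. x \<in> P \<and> (y, v) \<in> calP P P' L' f \<and> x \<noteq> y \<and> v \<in> perp P' L' (f x) \<longrightarrow>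
            card (perpset (bigP P L P' L' f) (bigL P L P' L' f) {BP x, BM y v}) \<ge> 3)
       \<and> (\<forall>u y v. u \<in> P' \<and> (y, v) \<in> calP P P' L' f \<and> u \<noteq> v \<and>
                  y \<in> perp P L (inv_into P f u) \<longrightarrow>
            card (perpset (bigP P L P' L' f) (bigL P L P' L' f) {BQ u, BM y v}) \<ge> 3)"
proof -
  interpret S: gq P L by unfold_locales (rule assms(1))
  interpret S': gq P' L' by unfold_locales (rule assms(2))
  note iso = assms(3)
  have sub: "\<And>l. l \<in> L \<Longrightarrow> l \<subseteq> P" using S.line_sub by blast
  have inj: "inj_on f P" and im: "f ` P = P'" using iso unfolding geom_iso_def bij_betw_def by auto
  have Lim: "(\<lambda>l. f ` l) ` L = L'" using iso unfolding geom_iso_def by auto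
  let ?bP = "bigP P L P' L' f" and ?bL = "bigL P L P' L' f"
  have finbP: "finite ?bP"
  proof -
    have "calP P P' L' f \<subseteq> P \<times> P'" unfolding calP_def perp_def by auto
    then have "finite (calP P P' L' f)" using S.P_fin S'.P_fin finite_subset by blast
    then show ?thesis unfolding bigP_def using S.P_fin S'.P_fin by auto
  qed
  have finps: "finite (perpset ?bP ?bL A)" for A
    using finbP by (rule finite_subset[rotated]) (auto simp: perpset_def)
  have fP: "f z \<in> P'" if "z \<in> P" for z using that im by auto
  have finj: "f a = f b \<longleftrightarrow> a = b" if "a \<in> P" "b \<in> P" for a b using inj that by (auto dest: inj_onD)
  have invP: "inv_into P f z \<in> P" "f (inv_into P f z) = z" if "z \<in> P'" for z
    using that im by (auto intro: inv_into_into f_inv_into_f)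
  show ?thesis
  proof (intro conjI allI impI)
    fix x y v
    assume H: "x \<in> P \<and> (y, v) \<in> calP P P' L' f \<and> x \<noteq> y \<and> v \<in> perp P' L' (f x)"
    then have x: "x \<in> P" and yv: "(y, v) \<in> calP P P' L' f" and xy: "x \<noteq> y"
      and vx: "v \<in> perp P' L' (f x)" by auto
    have y: "y \<in> P" and vy: "v \<in> perp P' L' (f y)" using yv unfolding calP_def by auto
    have vP: "v \<in> P'" using vx unfolding perp_def by auto
    have fxy: "f x \<noteq> f y" using finj x y xy by auto
    have vps: "v \<in> perpset P' L' {f x, f y}" using vx vy vP unfolding perpset_def by auto
    have core: "\<exists>v2 v3. v \<noteq> v2 \<and> v \<noteq> v3 \<and> v2 \<noteq> v3 \<and> (x,v2) \<in> calP P P' L' f \<and> (x,v3) \<in> calP P P' L' f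
        \<and> collinear ?bP ?bL (BM y v) (BM x v2) \<and> collinear ?bP ?bL (BM y v) (BM x v3)"
    proof (cases "collinear P L x y")
      case True
      then obtain l where l: "l \<in> L" "x \<in> l" "y \<in> l" unfolding collinear_def by auto
      obtain z where z: "l = {x,y,z}" "z \<noteq> x" "z \<noteq> y" by (rule card3_two[OF S.line_card[OF l(1)] l(2) l(3) xy])
      have zP: "z \<in> P" using sub l z by auto
      have fl: "f ` l \<in> L'" using Lim l by auto
      have pl: "perpset P' L' (f ` l) = f ` l" using S'.line_perp[OF fl] .
      have "perpset P' L' {f x, f y} = f ` l" using S'.line_perp2[OF fl imageI[OF l(2)] imageI[OF l(3)] fxy] .
      then have "v \<in> f ` l" using vps by auto
      then obtain v2 v3 where vv: "f ` l = {v,v2,v3}" "v \<noteq> v2" "v \<noteq> v3" "v2 \<noteq> v3"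
        by (rule card3_one[OF S'.line_card[OF fl]])
      have lL: "{x,y,z} \<in> L" using l(1) z(1) by simp
      have fT: "f ` {x,y,z} = f ` l" using z(1) by simp
      have ps0: "perpset P' L' (f ` {x,y,z}) = {v,v2,v3}" by (subst fT, subst pl, rule vv(1))
      have ps: "perpset P' L' (f ` {x,y,z}) = {v2,v,v3}" unfolding ps0 by blast
      have ps2: "perpset P' L' (f ` {x,y,z}) = {v3,v,v2}" unfolding ps0 by blast
      note m1 = mk_line[OF x y zP xy z(2)[symmetric] z(3)[symmetric] disjI1[OF lL] ps vv(2)[symmetric] vv(4) vv(3)]
      note m2 = mk_line[OF x y zP xy z(2)[symmetric] z(3)[symmetric] disjI1[OF lL] ps2 vv(3)[symmetric] vv(4)[symmetric] vv(2)]
      have c1: "collinear ?bP ?bL (BM y v) (BM x v2)" by (rule colS[OF conjunct1[OF m1]]) simp_all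
      have c2: "collinear ?bP ?bL (BM y v) (BM x v3)" by (rule colS[OF conjunct1[OF m2]]) simp_all
      have cp: "(x,v2) \<in> calP P P' L' f" "(x,v3) \<in> calP P P' L' f" using m1 m2 by simp_all
      show ?thesis by (rule exI[of _ v2], rule exI[of _ v3]) (simp add: vv(2-4) cp c1 c2)
    next
      case False
      have nc: "\<not> collinear P' L' (f x) (f y)" using False col_tr[OF iso sub x y] by auto
      have "card (perpset P' L' {f x, f y}) = 3" using S'.nc_perp_card fP x y fxy nc by blast
      then obtain v2 v3 where vv: "perpset P' L' {f x, f y} = {v,v2,v3}" "v \<noteq> v2" "v \<noteq> v3" "v2 \<noteq> v3"
        by (rule card3_one[OF _ vps])
      obtain c where c: "c \<in> P'" "c \<noteq> f x" "c \<noteq> f y" "\<not> collinear P' L' (f x) c"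
        "\<not> collinear P' L' (f y) c" "perpset P' L' {v,v2,v3} = {f x, f y, c}" "perpset P' L' {f x, f y, c} = {v,v2,v3}"
        by (rule S'.regular[OF fP[OF x] fP[OF y] fxy nc vv])
      define z where "z = inv_into P f c"
      have zP: "z \<in> P" and fz: "f z = c" using invP c(1) unfolding z_def by auto
      have zx: "z \<noteq> x" "z \<noteq> y" using fz c by auto
      have fT: "f ` {x,y,z} = {f x, f y, c}" using fz by auto
      have ct': "complete_triad P' L' (f ` {x,y,z})"
        unfolding fT using c vv fxy nc fP[OF x] fP[OF y] by (intro S'.ct_intro) auto
      have ct: "complete_triad P L {x,y,z}" using ct_tr[OF iso sub _ ct'] x y zP by auto
      have ps: "perpset P' L' (f ` {x,y,z}) = {v2,v,v3}" unfolding fT c(7) by blast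
      have ps2: "perpset P' L' (f ` {x,y,z}) = {v3,v,v2}" unfolding fT c(7) by blast
      note m1 = mk_line[OF x y zP xy zx(1)[symmetric] zx(2)[symmetric] disjI2[OF ct] ps vv(2)[symmetric] vv(4) vv(3)]
      note m2 = mk_line[OF x y zP xy zx(1)[symmetric] zx(2)[symmetric] disjI2[OF ct] ps2 vv(3)[symmetric] vv(4)[symmetric] vv(2)]
      have c1: "collinear ?bP ?bL (BM y v) (BM x v2)" by (rule colS[OF conjunct1[OF m1]]) simp_all
      have c2: "collinear ?bP ?bL (BM y v) (BM x v3)" by (rule colS[OF conjunct1[OF m2]]) simp_all
      have cp: "(x,v2) \<in> calP P P' L' f" "(x,v3) \<in> calP P P' L' f" using m1 m2 by simp_all
      show ?thesis by (rule exI[of _ v2], rule exI[of _ v3]) (simp add: vv(2-4) cp c1 c2)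
    qed
    then obtain v2 v3 where vv: "v \<noteq> v2" "v \<noteq> v3" "v2 \<noteq> v3" "(x,v2) \<in> calP P P' L' f"
      "(x,v3) \<in> calP P P' L' f" "collinear ?bP ?bL (BM y v) (BM x v2)"
      "collinear ?bP ?bL (BM y v) (BM x v3)" by blast
    have xv: "(x,v) \<in> calP P P' L' f" using x vx unfolding calP_def by auto
    have i1: "BQ v \<in> perpset ?bP ?bL {BP x, BM y v}"
      by (rule in_perpset2[OF in_bigP(3)[OF xv] colS[OF short_line[OF xv]] colS[OF short_line[OF yv]]]) simp_all
    have i2: "BM x v2 \<in> perpset ?bP ?bL {BP x, BM y v}"
      by (rule in_perpset2[OF in_bigP(2)[OF vv(4)] colS[OF short_line[OF vv(4)]] vv(6)]) simp_all
    have i3: "BM x v3 \<in> perpset ?bP ?bL {BP x, BM y v}"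
      by (rule in_perpset2[OF in_bigP(2)[OF vv(5)] colS[OF short_line[OF vv(5)]] vv(7)]) simp_all
    show "card (perpset ?bP ?bL {BP x, BM y v}) \<ge> 3"
      using card_ge3[OF finps i1 i2 i3] vv by auto
  next
    fix u y v
    assume H: "u \<in> P' \<and> (y, v) \<in> calP P P' L' f \<and> u \<noteq> v \<and> y \<in> perp P L (inv_into P f u)"
    then have u: "u \<in> P'" and yv: "(y, v) \<in> calP P P' L' f" and uv: "u \<noteq> v"
      and yu: "y \<in> perp P L (inv_into P f u)" by auto
    have y: "y \<in> P" and vy: "v \<in> perp P' L' (f y)" using yv unfolding calP_def by auto
    have vP: "v \<in> P'" using vy unfolding perp_def by auto
    have fyu: "f y \<in> perp P' L' u" using perp_tr[OF iso sub invP(1)[OF u] y] yu invP[OF u] by auto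
    have uy: "u \<in> perp P' L' (f y)" using S'.perp_sym[OF fyu u] .
    have yu': "(y,u) \<in> calP P P' L' f" using y uy unfolding calP_def by auto
    have fyps: "f y \<in> perpset P' L' {u, v}" using fyu S'.perp_sym[OF vy fP[OF y]] fP[OF y]
      unfolding perpset_def by auto
    have core: "\<exists>z1 z2. z1 \<noteq> z2 \<and> (z1,u) \<in> calP P P' L' f \<and> (z2,u) \<in> calP P P' L' f
        \<and> collinear ?bP ?bL (BM y v) (BM z1 u) \<and> collinear ?bP ?bL (BM y v) (BM z2 u)"
    proof (cases "collinear P' L' u v")
      case True
      then obtain l' where l': "l' \<in> L'" "u \<in> l'" "v \<in> l'" unfolding collinear_def by auto
      then obtain l where l: "l \<in> L" "l' = f ` l" using Lim by auto
      have "perpset P' L' {u, v} = l'" using S'.line_perp2[OF l'(1) l'(2) l'(3) uv] .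
      then have "f y \<in> f ` l" using fyps l(2) by simp
      then obtain b where b: "b \<in> l" "f y = f b" by blast
      then have "y = b" using finj[OF y] sub[OF l(1)] by blast
      then have yl: "y \<in> l" using b by simp
      obtain z1 z2 where zz: "l = {y,z1,z2}" "y \<noteq> z1" "y \<noteq> z2" "z1 \<noteq> z2"
        by (rule card3_one[OF S.line_card[OF l(1)] yl])
      have zP: "z1 \<in> P" "z2 \<in> P" using sub l zz by auto
      obtain w where w: "l' = {v,u,w}" "w \<noteq> v" "w \<noteq> u"
        by (rule card3_two[OF S'.line_card[OF l'(1)] l'(3) l'(2) uv[symmetric]])
      have pl: "perpset P' L' (f ` l) = l'" using S'.line_perp[OF l'(1)] l(2) by simp
      have e1: "{y,z1,z2} = l" using zz(1) by simp
      have e2: "{y,z2,z1} = l" using zz(1) by blast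
      have ps: "perpset P' L' (f ` {y,z1,z2}) = {v,u,w}" unfolding e1 pl w(1) by blast
      have ps2: "perpset P' L' (f ` {y,z2,z1}) = {v,u,w}" unfolding e2 pl w(1) by blast
      have l1: "{y,z1,z2} \<in> L" unfolding e1 by (rule l(1))
      have l2: "{y,z2,z1} \<in> L" unfolding e2 by (rule l(1))
      note m1 = mk_line[OF y zP(1) zP(2) zz(2) zz(3) zz(4) disjI1[OF l1] ps uv[symmetric] w(2)[symmetric] w(3)[symmetric]]
      note m2 = mk_line[OF y zP(2) zP(1) zz(3) zz(2) zz(4)[symmetric] disjI1[OF l2] ps2 uv[symmetric] w(2)[symmetric] w(3)[symmetric]]
      have c1: "collinear ?bP ?bL (BM y v) (BM z1 u)" by (rule colS[OF conjunct1[OF m1]]) simp_all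
      have c2: "collinear ?bP ?bL (BM y v) (BM z2 u)" by (rule colS[OF conjunct1[OF m2]]) simp_all
      have cp: "(z1,u) \<in> calP P P' L' f" "(z2,u) \<in> calP P P' L' f" using m1 m2 by simp_all
      show ?thesis by (rule exI[of _ z1], rule exI[of _ z2]) (simp add: zz(4) cp c1 c2)
    next
      case False
      have "card (perpset P' L' {u, v}) = 3" using S'.nc_perp_card u vP uv False by blast
      then obtain q r where qr: "perpset P' L' {u, v} = {f y, q, r}" "f y \<noteq> q" "f y \<noteq> r" "q \<noteq> r"
        by (rule card3_one[OF _ fyps])
      obtain c where c: "c \<in> P'" "c \<noteq> u" "c \<noteq> v" "\<not> collinear P' L' u c" "\<not> collinear P' L' v c"
        "perpset P' L' {f y, q, r} = {u, v, c}" "perpset P' L' {u, v, c} = {f y, q, r}"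
        by (rule S'.regular[OF u vP uv False qr])
      have qrP: "q \<in> P'" "r \<in> P'" using qr unfolding perpset_def by auto
      define z1 where "z1 = inv_into P f q"
      define z2 where "z2 = inv_into P f r"
      have zP: "z1 \<in> P" "z2 \<in> P" and fz: "f z1 = q" "f z2 = r"
        using invP qrP unfolding z1_def z2_def by auto
      have zz: "y \<noteq> z1" "y \<noteq> z2" "z1 \<noteq> z2" using fz qr by auto
      have fT: "f ` {y,z1,z2} = {f y, q, r}" using fz by auto
      have ncq: "\<not> collinear P' L' a b" if "a \<in> {f y, q, r}" "b \<in> {f y, q, r}" "a \<noteq> b" for a b
        using S'.perpset_noncol[OF u vP uv False] that qr by metis
      have ct': "complete_triad P' L' (f ` {y,z1,z2})"
        unfolding fT using c qr qrP fP[OF y] ncq uv by (intro S'.ct_intro) auto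
      have ct: "complete_triad P L {y,z1,z2}" using ct_tr[OF iso sub _ ct'] y zP by auto
      have e2: "{y,z2,z1} = {y,z1,z2}" by blast
      have ct2: "complete_triad P L {y,z2,z1}" unfolding e2 by (rule ct)
      have ps: "perpset P' L' (f ` {y,z1,z2}) = {v,u,c}" unfolding fT c(6) by blast
      have ps2: "perpset P' L' (f ` {y,z2,z1}) = {v,u,c}" unfolding e2 fT c(6) by blast
      note m1 = mk_line[OF y zP(1) zP(2) zz(1) zz(2) zz(3) disjI2[OF ct] ps uv[symmetric] c(3)[symmetric] c(2)[symmetric]]
      note m2 = mk_line[OF y zP(2) zP(1) zz(2) zz(1) zz(3)[symmetric] disjI2[OF ct2] ps2 uv[symmetric] c(3)[symmetric] c(2)[symmetric]]
      have c1: "collinear ?bP ?bL (BM y v) (BM z1 u)" by (rule colS[OF conjunct1[OF m1]]) simp_all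
      have c2: "collinear ?bP ?bL (BM y v) (BM z2 u)" by (rule colS[OF conjunct1[OF m2]]) simp_all
      have cp: "(z1,u) \<in> calP P P' L' f" "(z2,u) \<in> calP P P' L' f" using m1 m2 by simp_all
      show ?thesis by (rule exI[of _ z1], rule exI[of _ z2]) (simp add: zz(3) cp c1 c2)
    qed
    then obtain z1 z2 where zz: "z1 \<noteq> z2" "(z1,u) \<in> calP P P' L' f" "(z2,u) \<in> calP P P' L' f"
      "collinear ?bP ?bL (BM y v) (BM z1 u)" "collinear ?bP ?bL (BM y v) (BM z2 u)" by blast
    have i1: "BP y \<in> perpset ?bP ?bL {BQ u, BM y v}"
      by (rule in_perpset2[OF in_bigP(1)[OF yu'] colS[OF short_line[OF yu']] colS[OF short_line[OF yv]]]) simp_all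
    have i2: "BM z1 u \<in> perpset ?bP ?bL {BQ u, BM y v}"
      by (rule in_perpset2[OF in_bigP(2)[OF zz(2)] colS[OF short_line[OF zz(2)]] zz(4)]) simp_all
    have i3: "BM z2 u \<in> perpset ?bP ?bL {BQ u, BM y v}"
      by (rule in_perpset2[OF in_bigP(2)[OF zz(3)] colS[OF short_line[OF zz(3)]] zz(5)]) simp_all
    show "card (perpset ?bP ?bL {BQ u, BM y v}) \<ge> 3"
      using card_ge3[OF finps i1 i2 i3] zz by auto
  qed
qed

end
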